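(* Let $\Omega\subset\mathbb{R}^n$ be an open bounded domain with $\partial\Omega\in C^{2+\beta}$, $\beta>0$, let $r,a_1,P,K$ be continuous and positive on $\overline\Omega$ with $a_1,P\in C^2(\Omega)$. Suppose $u^*$ is a positive solution of $$\nabla\cdot\left[a_1(x)\nabla\left(\frac{u^*}{P}\right)\right]+r(x)u^*\left(1-\frac{u^*}{K}\right)=0,\ x\in\Omega,\qquad \frac{\partial(u^*/P)}{\partial n}=0,\ x\in\partial\Omega,$$ and that $\nabla\cdot[a_1(x)\nabla(K(x)/P(x))]\not\equiv 0$ on $\Omega$. Then $\int_\Omega r(x)K(x)\,dx>\int_\Omega r(x)u^*(x)\,dx$. *)

theory Defs
  imports "HOL-Analysis.Analysis"
begin

definition grad :: "('a::euclidean_space \<Rightarrow> real) \<Rightarrow> 'a \<Rightarrow> 'a" where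
  "grad f x = (\<Sum>i\<in>Basis. frechet_derivative f (at x) i *\<^sub>R i)"

definition divg :: "('a::euclidean_space \<Rightarrow> 'a) \<Rightarrow> 'a \<Rightarrow> real" where
  "divg F x = (\<Sum>i\<in>Basis. frechet_derivative F (at x) i \<bullet> i)"

definition C2_with :: "('a::euclidean_space \<Rightarrow> real) \<Rightarrow> 'a set \<Rightarrow> ('a \<Rightarrow> 'a) \<Rightarrow> ('a \<Rightarrow> 'a \<Rightarrow> 'a) \<Rightarrow> bool" where
  "C2_with f S g H \<longleftrightarrow>
     (\<forall>x\<in>S. (f has_derivative (\<lambda>h. g x \<bullet> h)) (at x)) \<and>
     (\<forall>x\<in>S. (g has_derivative H x) (at x)) \<and>
     (\<forall>i\<in>Basis. \<forall>j\<in>Basis. continuous_on S (\<lambda>x. H x i \<bullet> j))"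

definition C2_on :: "('a::euclidean_space \<Rightarrow> real) \<Rightarrow> 'a set \<Rightarrow> bool" where
  "C2_on f S \<longleftrightarrow> (\<exists>g H. C2_with f S g H)"

text \<open>rho is a global C^{2+beta} defining function for the bounded domain Omega:
  Omega = {rho < 0}, boundary = {rho = 0}, nonvanishing gradient on the boundary,
  and beta-Hoelder continuous second derivatives on the closure of Omega.\<close>
definition C2beta_defining_fun :: "'a::euclidean_space set \<Rightarrow> real \<Rightarrow> ('a \<Rightarrow> real) \<Rightarrow> bool" where
  "C2beta_defining_fun \<Omega> \<beta> \<rho> \<longleftrightarrow>
     (\<exists>g H. C2_with \<rho> UNIV g H \<and>
        (\<exists>C. \<forall>x\<in>closure \<Omega>. \<forall>y\<in>closure \<Omega>. \<forall>i\<in>Basis. \<forall>j\<in>Basis.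
              \<bar>H x i \<bullet> j - H y i \<bullet> j\<bar> \<le> C * dist x y powr \<beta>)) \<and>
     \<Omega> = {x. \<rho> x < 0} \<and> frontier \<Omega> = {x. \<rho> x = 0} \<and>
     (\<forall>x\<in>frontier \<Omega>. grad \<rho> x \<noteq> 0)"

definition boundary_C2beta :: "'a::euclidean_space set \<Rightarrow> real \<Rightarrow> bool" where
  "boundary_C2beta \<Omega> \<beta> \<longleftrightarrow> (\<exists>\<rho>. C2beta_defining_fun \<Omega> \<beta> \<rho>)"

definition outward_normal :: "('a::euclidean_space \<Rightarrow> real) \<Rightarrow> 'a \<Rightarrow> 'a" where
  "outward_normal \<rho> x = grad \<rho> x /\<^sub>R norm (grad \<rho> x)"

end

theory Submission
  imports Defs
begin

lemma deriv_glue: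
  fixes f g h :: "real \<Rightarrow> real"
  assumes g: "(g has_real_derivative D) (at a)" and h: "(h has_real_derivative D) (at a)"
    and fa: "f a = g a" "f a = h a"
    and l: "\<And>s. a - 1 < s \<Longrightarrow> s < a \<Longrightarrow> f s = g s" and r: "\<And>s. s > a \<Longrightarrow> s < a + 1 \<Longrightarrow> f s = h s"
  shows "(f has_real_derivative D) (at a)"
  unfolding has_field_derivative_iff
proof (rule filterlim_split_at)
  have "((\<lambda>y. (g y - g a) / (y - a)) \<longlongrightarrow> D) (at_left a)"
    using g unfolding has_field_derivative_iff by (rule filterlim_mono) (auto simp: at_le)
  then show "((\<lambda>y. (f y - f a) / (y - a)) \<longlongrightarrow> D) (at_left a)"
    by (rule Lim_transform_eventually)
       (auto simp: fa(1) l intro!: eventually_mono[OF eventually_at_left_real[of "a - 1" a]])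
next
  have "((\<lambda>y. (h y - h a) / (y - a)) \<longlongrightarrow> D) (at_right a)"
    using h unfolding has_field_derivative_iff by (rule filterlim_mono) (auto simp: at_le)
  then show "((\<lambda>y. (f y - f a) / (y - a)) \<longlongrightarrow> D) (at_right a)"
    by (rule Lim_transform_eventually)
       (auto simp: fa(2) r intro!: eventually_mono[OF eventually_at_right_real[of a "a + 1"]])
qed

definition chi :: "real \<Rightarrow> real" where
  "chi s = (if s \<le> -2 then 1 else if s \<ge> -1 then 0 else 1 - 3*(s+2)^2 + 2*(s+2)^3)"
definition dchi :: "real \<Rightarrow> real" where
  "dchi s = (if s \<le> -2 then 0 else if s \<ge> -1 then 0 else 6*(s+2)*(s+1))"

lemma poly_deriv: "((\<lambda>s::real. 1 - 3*(s+2)^2 + 2*(s+2)^3) has_real_derivative 6*(s+2)*(s+1)) (at s)"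
  by (auto intro!: derivative_eq_intros simp: algebra_simps power2_eq_square)

lemma chi_deriv: "(chi has_real_derivative dchi s) (at s)"
proof -
  consider "s < -2" | "s = -2" | "-2 < s \<and> s < -1" | "s = -1" | "s > -1" by linarith
  then show ?thesis
  proof cases
    case 1
    show ?thesis
      by (rule has_field_derivative_transform_within_open[where f="\<lambda>_. 1" and S="{..<-2}"])
         (use 1 in \<open>auto simp: chi_def dchi_def\<close>)
  next
    case 2
    show ?thesis
      by (rule deriv_glue[where g="\<lambda>_. 1" and h="\<lambda>s::real. 1 - 3*(s+2)^2 + 2*(s+2)^3"])
         (use 2 poly_deriv[of s] in \<open>auto simp: chi_def dchi_def\<close>)
  next
    case 3
    have e: "dchi s = 6*(s+2)*(s+1)" using 3 by (simp add: dchi_def)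
    show ?thesis unfolding e
      by (rule has_field_derivative_transform_within_open[OF poly_deriv, where S="{-2<..<-1}"])
         (use 3 in \<open>auto simp: chi_def dchi_def\<close>)
  next
    case 4
    show ?thesis
      by (rule deriv_glue[where h="\<lambda>_. 0" and g="\<lambda>s::real. 1 - 3*(s+2)^2 + 2*(s+2)^3"])
         (use 4 poly_deriv[of s] in \<open>auto simp: chi_def dchi_def\<close>)
  next
    case 5
    show ?thesis
      by (rule has_field_derivative_transform_within_open[where f="\<lambda>_. 0" and S="{-1<..}"])
         (use 5 in \<open>auto simp: chi_def dchi_def\<close>)
  qed
qed

lemma dchi_cont: "continuous_on UNIV dchi"
proof -
  have c1: "continuous_on UNIV (\<lambda>s::real. if s \<le> -1 then 6*(s+2)*(s+1) else 0)"
    by (rule continuous_on_cases_le[where h="\<lambda>s. s"]) (auto intro!: continuous_intros)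
  have e: "dchi = (\<lambda>s. if s \<le> -2 then 0 else if s \<le> -1 then 6*(s+2)*(s+1) else 0)"
    by (auto simp: dchi_def fun_eq_iff)
  show ?thesis unfolding e
    by (rule continuous_on_cases_le[where h="\<lambda>s. s"]) (auto intro!: continuous_intros continuous_on_subset[OF c1])
qed

lemma chi_bounds: "0 \<le> chi s" "chi s \<le> 1"
proof -
  have *: "0 \<le> 1 - 3*t^2 + 2*t^3 \<and> 1 - 3*t^2 + 2*t^3 \<le> 1" if "0 \<le> t" "t \<le> 1" for t :: real
  proof -
    have "1 - 3*t^2 + 2*t^3 = (1-t)^2 * (1 + 2*t)" by (simp add: algebra_simps power2_eq_square power3_eq_cube)
    moreover have "1 - 3*t^2 + 2*t^3 = 1 - t^2 * (3 - 2*t)" by (simp add: algebra_simps power2_eq_square power3_eq_cube)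
    moreover have "0 \<le> t^2 * (3 - 2*t)" using that by simp
    moreover have "0 \<le> (1-t)^2 * (1 + 2*t)" using that by simp
    ultimately show ?thesis by linarith
  qed
  show "0 \<le> chi s" "chi s \<le> 1" using *[of "s+2"] by (auto simp: chi_def)
qed

lemma dchi_nonpos: "dchi s \<le> 0"
  by (auto simp: dchi_def mult_nonneg_nonpos2 intro!: mult_nonneg_nonpos)

lemma dchi_supp: "dchi s \<noteq> 0 \<Longrightarrow> -2 < s \<and> s < -1"
  by (auto simp: dchi_def split: if_splits)

lemma chi_zero: "s \<ge> -1 \<Longrightarrow> chi s = 0" and chi_one: "s \<le> -2 \<Longrightarrow> chi s = 1"
  by (auto simp: chi_def)

lemma deriv_zero_outside:
  fixes \<psi> :: "'a::euclidean_space \<Rightarrow> 'b::real_normed_vector"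
  assumes "(\<psi> has_derivative D) (at x)" "closed S" "x \<notin> S" "\<And>y. y \<notin> S \<Longrightarrow> \<psi> y = 0"
  shows "D = (\<lambda>h. 0)"
proof -
  have "((\<lambda>_. 0) has_derivative (\<lambda>h. 0)) (at x)" by simp
  then have "(\<psi> has_derivative (\<lambda>h. 0)) (at x)"
    by (rule has_derivative_transform_within_open[where s="- S"]) (use assms in auto)
  then show ?thesis using assms(1) has_derivative_unique by blast
qed

lemma core_i:
  fixes \<psi> :: "'a::euclidean_space \<Rightarrow> 'a" and D :: "'a \<Rightarrow> 'a \<Rightarrow> 'a"
  assumes der: "\<And>x. (\<psi> has_derivative D x) (at x)"
    and cont: "continuous_on UNIV (\<lambda>x. D x i)"
    and S: "compact S" "\<And>x. x \<notin> S \<Longrightarrow> \<psi> x = 0"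
    and i: "i \<in> Basis"
  shows "((\<lambda>x. D x i \<bullet> i) has_integral 0) UNIV"
proof -
  obtain R where R: "S \<subseteq> ball 0 R"
    using bounded_subset_ballD[OF compact_imp_bounded[OF S(1)], of 0] by auto
  define c :: 'a where "c = (R + 1) *\<^sub>R One"
  define B where "B = cbox (-c) c"
  define f where "f x = \<psi> x \<bullet> i" for x
  have psic: "continuous_on UNIV \<psi>"
    by (intro continuous_at_imp_continuous_on ballI has_derivative_continuous[OF der])
  have inB: "y - t *\<^sub>R i \<in> B" if "y \<in> S" "\<bar>t\<bar> \<le> 1" for y t
  proof -
    have "y \<in> ball 0 R" using R that(1) by (rule subsetD)
    then have ny: "norm y \<le> R" by simp
    have "\<bar>(y - t *\<^sub>R i) \<bullet> j\<bar> \<le> R + 1" if "j \<in> Basis" for j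
    proof -
      have e: "(y - t *\<^sub>R i) \<bullet> j = y \<bullet> j - t * (i \<bullet> j)" by (simp add: inner_diff_left)
      have "\<bar>(y - t *\<^sub>R i) \<bullet> j\<bar> \<le> \<bar>y \<bullet> j\<bar> + \<bar>t\<bar> * \<bar>i \<bullet> j\<bar>"
        unfolding e abs_mult[symmetric] by (rule abs_triangle_ineq4)
      also have "\<dots> \<le> norm y + 1 * 1"
        using Basis_le_norm[OF that, of y] \<open>\<bar>t\<bar> \<le> 1\<close> i that
        by (intro add_mono mult_mono) (auto simp: inner_Basis)
      finally show ?thesis using ny by simp
    qed
    then show ?thesis unfolding B_def mem_box
    proof (intro ballI conjI)
      fix j :: 'a assume j: "j \<in> Basis" and h: "\<And>j. j \<in> Basis \<Longrightarrow> \<bar>(y - t *\<^sub>R i) \<bullet> j\<bar> \<le> R + 1"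
      have cj: "c \<bullet> j = R + 1" using j by (simp add: c_def)
      show "- c \<bullet> j \<le> (y - t *\<^sub>R i) \<bullet> j" "(y - t *\<^sub>R i) \<bullet> j \<le> c \<bullet> j"
        using h[OF j] cj by (simp_all add: inner_minus_left abs_le_iff)
    qed
  qed
  have SB: "S \<subseteq> B" using inB[of _ 0] by auto
  define T where "T t = integral B (\<lambda>x. f (x + t *\<^sub>R i))" for t
  have fcont: "continuous_on UNIV f" unfolding f_def by (intro continuous_intros psic)
  have Tconst: "T t = integral UNIV f" if t: "t \<in> {-1..1}" for t
  proof -
    have int: "((\<lambda>x. f (x + t *\<^sub>R i)) has_integral T t) B"
      unfolding T_def B_def
      by (rule integrable_integral, rule integrable_continuous)
         (intro continuous_on_compose2[OF fcont] continuous_intros, auto)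
    have "(((\<lambda>x. f x) \<circ> (+) (t *\<^sub>R i)) has_integral T t) (cbox (-c) c)"
      using int unfolding B_def by (simp add: o_def add.commute)
    then have "(f has_integral T t) (cbox (-c + t *\<^sub>R i) (c + t *\<^sub>R i))"
      using has_integral_shift_cbox_iff by blast
    then have "(f has_integral T t) UNIV"
    proof (rule has_integral_on_superset)
      show "f x = 0" if "x \<notin> cbox (- c + t *\<^sub>R i) (c + t *\<^sub>R i)" for x
      proof (rule ccontr)
        assume "f x \<noteq> 0"
        then have "x \<in> S" using S(2) unfolding f_def by force
        then have "x - t *\<^sub>R i \<in> B" using inB t by auto
        then have "x \<in> cbox (- c + t *\<^sub>R i) (c + t *\<^sub>R i)"
          unfolding B_def mem_box
        proof (intro ballI conjI)
          fix j :: 'a assume j: "j \<in> Basis" and h: "\<forall>j\<in>Basis. - c \<bullet> j \<le> (x - t *\<^sub>R i) \<bullet> j \<and> (x - t *\<^sub>R i) \<bullet> j \<le> c \<bullet> j"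
          have e1: "(x - t *\<^sub>R i) \<bullet> j = x \<bullet> j - t * (i \<bullet> j)" by (simp add: inner_diff_left)
          have e2: "(- c + t *\<^sub>R i) \<bullet> j = - (c \<bullet> j) + t * (i \<bullet> j)" "(c + t *\<^sub>R i) \<bullet> j = c \<bullet> j + t * (i \<bullet> j)"
            by (simp_all add: inner_add_left inner_diff_left)
          show "(- c + t *\<^sub>R i) \<bullet> j \<le> x \<bullet> j" "x \<bullet> j \<le> (c + t *\<^sub>R i) \<bullet> j"
            using h j unfolding e2 by (auto simp: e1 inner_minus_left)
        qed
        then show False using that by blast
      qed
    qed auto
    then show ?thesis by (rule integral_unique[symmetric])
  qed
  have Dcont: "continuous_on UNIV (\<lambda>x. D x i \<bullet> i)" by (intro continuous_intros cont)
  have lb: "(T has_field_derivative integral B (\<lambda>x. D (x + 0 *\<^sub>R i) i \<bullet> i)) (at 0 within {-1..1})"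
    unfolding T_def B_def f_def
  proof (rule leibniz_rule_field_derivative)
    fix t x
    have "((\<lambda>t. \<psi> (x + t *\<^sub>R i)) has_derivative (\<lambda>s. D (x + t *\<^sub>R i) (s *\<^sub>R i))) (at t)"
      by (rule has_derivative_compose[OF _ der]) (auto intro!: derivative_eq_intros)
    then have "((\<lambda>t. \<psi> (x + t *\<^sub>R i) \<bullet> i) has_derivative (\<lambda>s. D (x + t *\<^sub>R i) (s *\<^sub>R i) \<bullet> i)) (at t)"
      by (auto intro!: derivative_eq_intros)
    moreover have "(\<lambda>s. D (x + t *\<^sub>R i) (s *\<^sub>R i) \<bullet> i) = (*) (D (x + t *\<^sub>R i) i \<bullet> i)"
    proof -
      have "linear (D (x + t *\<^sub>R i))" using has_derivative_linear[OF der] .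
      then show ?thesis by (auto simp: fun_eq_iff linear_scale)
    qed
    ultimately show "((\<lambda>t. \<psi> (x + t *\<^sub>R i) \<bullet> i) has_field_derivative D (x + t *\<^sub>R i) i \<bullet> i) (at t within {-1..1})"
      unfolding has_field_derivative_def by (auto intro: has_derivative_at_withinI)
  next
    fix t :: real
    show "(\<lambda>x. \<psi> (x + t *\<^sub>R i) \<bullet> i) integrable_on cbox (- c) c"
      by (rule integrable_continuous) (intro continuous_on_compose2[OF psic] continuous_intros, auto)
  next
    show "continuous_on ({-1..1} \<times> cbox (- c) c) (\<lambda>(t, x). D (x + t *\<^sub>R i) i \<bullet> i)"
    proof -
      have "continuous_on ({-1..1} \<times> cbox (- c) c) (\<lambda>p. (\<lambda>x. D x i \<bullet> i) (snd p + fst p *\<^sub>R i))"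
        by (rule continuous_on_compose2[OF Dcont]) (auto intro!: continuous_intros)
      then show ?thesis by (simp add: split_beta)
    qed
  qed auto
  have "at (0::real) within {-1..1} = at 0" by (rule at_within_interior) auto
  with lb have lb': "(T has_field_derivative integral B (\<lambda>x. D x i \<bullet> i)) (at 0)" by simp
  have "(T has_field_derivative 0) (at 0)"
    by (rule has_field_derivative_transform_within_open[where f="\<lambda>_. integral UNIV f" and S="{-1<..<1}"])
       (auto simp: Tconst)
  with lb' have I0: "integral B (\<lambda>x. D x i \<bullet> i) = 0" using DERIV_unique by blast
  have "(\<lambda>x. D x i \<bullet> i) integrable_on B"
    unfolding B_def by (rule integrable_continuous[OF continuous_on_subset[OF Dcont]]) simp
  then have "((\<lambda>x. D x i \<bullet> i) has_integral integral B (\<lambda>x. D x i \<bullet> i)) B"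
    by (rule integrable_integral)
  then have "((\<lambda>x. D x i \<bullet> i) has_integral 0) B" using I0 by simp
  then show ?thesis
  proof (rule has_integral_on_superset)
    fix x assume "x \<notin> B"
    then have "x \<notin> S" using SB by auto
    have "D x = (\<lambda>h. 0)"
      by (rule deriv_zero_outside[OF der compact_imp_closed[OF S(1)] \<open>x \<notin> S\<close> S(2)])
    then show "D x i \<bullet> i = 0" by simp
  qed auto
qed

lemma core:
  fixes \<psi> :: "'a::euclidean_space \<Rightarrow> 'a" and D :: "'a \<Rightarrow> 'a \<Rightarrow> 'a"
  assumes der: "\<And>x. (\<psi> has_derivative D x) (at x)"
    and cont: "\<And>i. i \<in> Basis \<Longrightarrow> continuous_on UNIV (\<lambda>x. D x i)"
    and S: "compact S" "\<And>x. x \<notin> S \<Longrightarrow> \<psi> x = 0"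
  shows "((\<lambda>x. \<Sum>i\<in>Basis. D x i \<bullet> i) has_integral 0) UNIV"
proof -
  have "((\<lambda>x. \<Sum>i\<in>Basis. D x i \<bullet> i) has_integral (\<Sum>i\<in>Basis. 0)) UNIV"
    using has_integral_sum[of Basis "\<lambda>i x. D x i \<bullet> i" "\<lambda>_. 0" UNIV] core_i[OF der cont S] by auto
  then show ?thesis by simp
qed

definition C1R :: "('a::euclidean_space \<Rightarrow> real) \<Rightarrow> ('a \<Rightarrow> 'a) \<Rightarrow> 'a set \<Rightarrow> bool" where
  "C1R f g S \<longleftrightarrow> (\<forall>x\<in>S. (f has_derivative (\<lambda>h. g x \<bullet> h)) (at x)) \<and> continuous_on S g"

definition C1V :: "('a::euclidean_space \<Rightarrow> 'a) \<Rightarrow> ('a \<Rightarrow> 'a \<Rightarrow> 'a) \<Rightarrow> 'a set \<Rightarrow> bool" where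
  "C1V V D S \<longleftrightarrow> (\<forall>x\<in>S. (V has_derivative D x) (at x)) \<and> (\<forall>i\<in>Basis. continuous_on S (\<lambda>x. D x i))"

lemma C1R_cont: "C1R f g S \<Longrightarrow> continuous_on S f"
  unfolding C1R_def by (auto intro!: continuous_at_imp_continuous_on has_derivative_continuous)

lemma C1V_cont: "C1V V D S \<Longrightarrow> continuous_on S V"
  unfolding C1V_def by (auto intro!: continuous_at_imp_continuous_on has_derivative_continuous)

lemma C2_with_C1:
  assumes "C2_with f S g H"
  shows "C1R f g S" "C1V g H S"
proof -
  have dg: "\<forall>x\<in>S. (g has_derivative H x) (at x)" using assms unfolding C2_with_def by blast
  have cg: "continuous_on S g"
    using dg by (auto intro!: continuous_at_imp_continuous_on has_derivative_continuous)
  show "C1R f g S" using assms cg unfolding C2_with_def C1R_def by blast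
  have "continuous_on S (\<lambda>x. H x i)" if i: "i \<in> Basis" for i
  proof -
    have "continuous_on S (\<lambda>x. \<Sum>j\<in>Basis. (H x i \<bullet> j) *\<^sub>R j)"
      by (intro continuous_on_sum continuous_on_scaleR continuous_on_const)
         (use assms i in \<open>auto simp: C2_with_def\<close>)
    then show ?thesis by (simp add: euclidean_representation)
  qed
  then show "C1V g H S" using dg unfolding C1V_def by blast
qed

lemma C1R_mult:
  assumes "C1R f gf S" "C1R g gg S"
  shows "C1R (\<lambda>x. f x * g x) (\<lambda>x. f x *\<^sub>R gg x + g x *\<^sub>R gf x) S"
  unfolding C1R_def
proof
  show "\<forall>x\<in>S. ((\<lambda>x. f x * g x) has_derivative (\<lambda>h. (f x *\<^sub>R gg x + g x *\<^sub>R gf x) \<bullet> h)) (at x)"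
  proof
    fix x assume x: "x \<in> S"
    have "((\<lambda>x. f x * g x) has_derivative (\<lambda>h. f x * (gg x \<bullet> h) + (gf x \<bullet> h) * g x)) (at x)"
      using assms x unfolding C1R_def by (intro has_derivative_mult) auto
    moreover have "(\<lambda>h. f x * (gg x \<bullet> h) + (gf x \<bullet> h) * g x) = (\<lambda>h. (f x *\<^sub>R gg x + g x *\<^sub>R gf x) \<bullet> h)"
      by (auto simp: fun_eq_iff inner_add_left algebra_simps)
    ultimately show "((\<lambda>x. f x * g x) has_derivative (\<lambda>h. (f x *\<^sub>R gg x + g x *\<^sub>R gf x) \<bullet> h)) (at x)"
      by simp
  qed
  show "continuous_on S (\<lambda>x. f x *\<^sub>R gg x + g x *\<^sub>R gf x)"
    using assms C1R_cont[OF assms(1)] C1R_cont[OF assms(2)] unfolding C1R_def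
    by (intro continuous_intros) auto
qed

lemma C1R_minus:
  assumes "C1R f g S"
  shows "C1R (\<lambda>x. - f x) (\<lambda>x. - g x) S"
  using assms unfolding C1R_def
  by (auto intro!: continuous_intros derivative_eq_intros)

lemma C1R_inverse:
  assumes "C1R f g S" "\<And>x. x \<in> S \<Longrightarrow> f x \<noteq> 0"
  shows "C1R (\<lambda>x. inverse (f x)) (\<lambda>x. (- (inverse (f x) * inverse (f x))) *\<^sub>R g x) S"
  unfolding C1R_def
proof
  show "\<forall>x\<in>S. ((\<lambda>x. inverse (f x)) has_derivative (\<lambda>h. ((- (inverse (f x) * inverse (f x))) *\<^sub>R g x) \<bullet> h)) (at x)"
  proof
    fix x assume x: "x \<in> S"
    have d: "(f has_derivative (\<lambda>h. g x \<bullet> h)) (at x)" using assms x unfolding C1R_def by auto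
    have "((\<lambda>x. inverse (f x)) has_derivative (\<lambda>h. - (inverse (f x) * (g x \<bullet> h) * inverse (f x)))) (at x)"
      by (rule Deriv.has_derivative_inverse[OF _ d]) (use assms x in auto)
    moreover have "(\<lambda>h. - (inverse (f x) * (g x \<bullet> h) * inverse (f x))) = (\<lambda>h. ((- (inverse (f x) * inverse (f x))) *\<^sub>R g x) \<bullet> h)"
      by (auto simp: fun_eq_iff algebra_simps)
    ultimately show "((\<lambda>x. inverse (f x)) has_derivative (\<lambda>h. ((- (inverse (f x) * inverse (f x))) *\<^sub>R g x) \<bullet> h)) (at x)"
      by simp
  qed
  show "continuous_on S (\<lambda>x. (- (inverse (f x) * inverse (f x))) *\<^sub>R g x)"
    using assms C1R_cont[OF assms(1)] unfolding C1R_def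
    by (intro continuous_intros) auto
qed

lemma C1V_scaleR:
  assumes "C1R a ga S" "C1V V D S"
  shows "C1V (\<lambda>x. a x *\<^sub>R V x) (\<lambda>x h. (ga x \<bullet> h) *\<^sub>R V x + a x *\<^sub>R D x h) S"
  unfolding C1V_def
proof
  show "\<forall>x\<in>S. ((\<lambda>x. a x *\<^sub>R V x) has_derivative (\<lambda>h. (ga x \<bullet> h) *\<^sub>R V x + a x *\<^sub>R D x h)) (at x)"
  proof
    fix x assume x: "x \<in> S"
    have "((\<lambda>x. a x *\<^sub>R V x) has_derivative (\<lambda>h. a x *\<^sub>R D x h + (ga x \<bullet> h) *\<^sub>R V x)) (at x)"
      using assms x unfolding C1R_def C1V_def by (intro has_derivative_scaleR) auto
    then show "((\<lambda>x. a x *\<^sub>R V x) has_derivative (\<lambda>h. (ga x \<bullet> h) *\<^sub>R V x + a x *\<^sub>R D x h)) (at x)"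
      by (simp add: add.commute)
  qed
  show "\<forall>i\<in>Basis. continuous_on S (\<lambda>x. (ga x \<bullet> i) *\<^sub>R V x + a x *\<^sub>R D x i)"
    using assms C1R_cont[OF assms(1)] C1V_cont[OF assms(2)] unfolding C1R_def C1V_def
    by (auto intro!: continuous_intros)
qed

lemma C1V_add:
  assumes "C1V V D S" "C1V W E S"
  shows "C1V (\<lambda>x. V x + W x) (\<lambda>x h. D x h + E x h) S"
  using assms unfolding C1V_def
  by (auto intro!: continuous_intros has_derivative_add)

lemma C1V_mono: "C1V V D S \<Longrightarrow> T \<subseteq> S \<Longrightarrow> C1V V D T"
  unfolding C1V_def by (auto intro: continuous_on_subset)

lemma C1R_mono: "C1R V D S \<Longrightarrow> T \<subseteq> S \<Longrightarrow> C1R V D T"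
  unfolding C1R_def by (auto intro: continuous_on_subset)

lemma grad_eq:
  assumes "(f has_derivative (\<lambda>h. g \<bullet> h)) (at x)"
  shows "grad f x = g"
proof -
  have "frechet_derivative f (at x) = (\<lambda>h. g \<bullet> h)" using frechet_derivative_at[OF assms] by simp
  have "(\<Sum>i\<in>Basis. (g \<bullet> i) *\<^sub>R i) = g" by (rule euclidean_representation)
  then show ?thesis unfolding grad_def \<open>frechet_derivative f (at x) = (\<lambda>h. g \<bullet> h)\<close> by simp
qed

lemma divg_eq:
  assumes "(V has_derivative D) (at x)"
  shows "divg V x = (\<Sum>i\<in>Basis. D i \<bullet> i)"
  using frechet_derivative_at[OF assms] unfolding divg_def by simp

lemma frechet_local:
  assumes "open S" "x \<in> S" "\<And>y. y \<in> S \<Longrightarrow> f y = g y"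
  shows "frechet_derivative f (at x) = frechet_derivative g (at x)"
proof -
  have "(f has_derivative D) (at x) \<longleftrightarrow> (g has_derivative D) (at x)" for D
    using assms has_derivative_transform_within_open[of _ D x UNIV S] by metis
  then show ?thesis unfolding frechet_derivative_def by simp
qed

lemma divg_local:
  assumes "open S" "x \<in> S" "\<And>y. y \<in> S \<Longrightarrow> f y = g y"
  shows "divg f x = divg g x"
  unfolding divg_def using frechet_local[OF assms] by simp

lemma grad_local:
  assumes "open S" "x \<in> S" "\<And>y. y \<in> S \<Longrightarrow> f y = g y"
  shows "grad f x = grad g x"
  unfolding grad_def using frechet_local[OF assms] by simp

lemma neg_on_compact:
  fixes \<rho> :: "'a::metric_space \<Rightarrow> real"
  assumes "compact C" "continuous_on C \<rho>" "\<And>x. x \<in> C \<Longrightarrow> \<rho> x < 0"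
  shows "\<exists>e>0. \<forall>x\<in>C. \<rho> x \<le> -e"
proof (cases "C = {}")
  case True then show ?thesis by (intro exI[of _ 1]) auto
next
  case False
  obtain x0 where "x0 \<in> C" "\<And>y. y \<in> C \<Longrightarrow> \<rho> y \<le> \<rho> x0"
    using continuous_attains_sup[OF assms(1) False assms(2)] by blast
  then show ?thesis using assms(3) by (intro exI[of _ "- \<rho> x0"]) auto
qed

lemma isCont_local:
  assumes "open N" "x \<in> N" "\<And>y. y \<in> N \<Longrightarrow> f y = g y" "isCont g x"
  shows "isCont f x"
proof -
  have "eventually (\<lambda>y. f y = g y) (nhds x)"
    unfolding eventually_nhds using assms(1-3) by blast
  then show ?thesis using isCont_cong assms(4) by blast
qed

lemma cutoff_deriv:
  assumes rho: "C1R \<rho> g UNIV" and eps: "\<epsilon> > 0"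
  shows "C1R (\<lambda>x. chi (\<rho> x / \<epsilon>)) (\<lambda>x. (dchi (\<rho> x / \<epsilon>) / \<epsilon>) *\<^sub>R g x) UNIV"
  unfolding C1R_def
proof
  show "\<forall>x\<in>UNIV. ((\<lambda>x. chi (\<rho> x / \<epsilon>)) has_derivative (\<lambda>h. ((dchi (\<rho> x / \<epsilon>) / \<epsilon>) *\<^sub>R g x) \<bullet> h)) (at x)"
  proof
    fix x :: 'a
    have d1: "((\<lambda>x. \<rho> x / \<epsilon>) has_derivative (\<lambda>h. (g x \<bullet> h) / \<epsilon>)) (at x)"
      using rho eps unfolding C1R_def by (auto intro!: derivative_eq_intros)
    have d2: "(chi has_derivative (*) (dchi (\<rho> x / \<epsilon>))) (at (\<rho> x / \<epsilon>))"
      using chi_deriv[of "\<rho> x / \<epsilon>"] unfolding has_field_derivative_def .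
    have "((\<lambda>x. chi (\<rho> x / \<epsilon>)) has_derivative (\<lambda>h. dchi (\<rho> x / \<epsilon>) * ((g x \<bullet> h) / \<epsilon>))) (at x)"
      using has_derivative_compose[OF d1 d2] by simp
    moreover have "(\<lambda>h. dchi (\<rho> x / \<epsilon>) * ((g x \<bullet> h) / \<epsilon>)) = (\<lambda>h. ((dchi (\<rho> x / \<epsilon>) / \<epsilon>) *\<^sub>R g x) \<bullet> h)"
      by (auto simp: fun_eq_iff)
    ultimately show "((\<lambda>x. chi (\<rho> x / \<epsilon>)) has_derivative (\<lambda>h. ((dchi (\<rho> x / \<epsilon>) / \<epsilon>) *\<^sub>R g x) \<bullet> h)) (at x)"
      by simp
  qed
  have "continuous_on UNIV (\<lambda>x. dchi (\<rho> x / \<epsilon>))"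
    by (rule continuous_on_compose2[OF dchi_cont]) (use C1R_cont[OF rho] eps in \<open>auto intro!: continuous_intros\<close>)
  then show "continuous_on UNIV (\<lambda>x. (dchi (\<rho> x / \<epsilon>) / \<epsilon>) *\<^sub>R g x)"
    using rho eps unfolding C1R_def by (auto intro!: continuous_intros)
qed

lemma cut:
  fixes \<Omega> :: "'a::euclidean_space set" and \<rho> :: "'a \<Rightarrow> real"
  assumes \<Omega>: "open \<Omega>" "bounded \<Omega>" "\<Omega> = {x. \<rho> x < 0}"
    and rho: "C1R \<rho> g UNIV" and eps: "\<epsilon> > 0" and V: "C1V V D \<Omega>"
  shows "((\<lambda>x. chi (\<rho> x / \<epsilon>) * (\<Sum>i\<in>Basis. D x i \<bullet> i) + dchi (\<rho> x / \<epsilon>) / \<epsilon> * (g x \<bullet> V x)) has_integral 0) \<Omega>"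
proof -
  define \<phi> where "\<phi> x = chi (\<rho> x / \<epsilon>)" for x
  define d\<phi> where "d\<phi> x = (dchi (\<rho> x / \<epsilon>) / \<epsilon>) *\<^sub>R g x" for x
  have phi: "C1R \<phi> d\<phi> UNIV" unfolding \<phi>_def[abs_def] d\<phi>_def[abs_def] by (rule cutoff_deriv[OF rho eps])
  have prod: "C1V (\<lambda>x. \<phi> x *\<^sub>R V x) (\<lambda>x h. (d\<phi> x \<bullet> h) *\<^sub>R V x + \<phi> x *\<^sub>R D x h) \<Omega>"
    by (rule C1V_scaleR[OF C1R_mono[OF phi] V]) simp
  define \<psi> where "\<psi> x = (if x \<in> \<Omega> then \<phi> x *\<^sub>R V x else 0)" for x
  define \<psi>' where "\<psi>' x h = (if x \<in> \<Omega> then (d\<phi> x \<bullet> h) *\<^sub>R V x + \<phi> x *\<^sub>R D x h else 0)" for x h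
  have rhoc: "continuous_on UNIV \<rho>" using C1R_cont[OF rho] .
  define N where "N = {x. - \<epsilon> < \<rho> x}"
  have N: "open N" unfolding N_def by (rule open_Collect_less) (auto intro: rhoc)
  have phiN: "\<phi> y = 0" "d\<phi> y = 0" if "y \<in> N" for y
  proof -
    have "\<rho> y / \<epsilon> \<ge> -1" using that eps unfolding N_def by (simp add: field_simps)
    then show "\<phi> y = 0" "d\<phi> y = 0" unfolding \<phi>_def d\<phi>_def
      using chi_zero dchi_supp by force+
  qed
  have NO: "x \<in> N" if "x \<notin> \<Omega>" for x using that eps \<Omega>(3) unfolding N_def by auto
  have der: "(\<psi> has_derivative \<psi>' x) (at x)" for x
  proof (cases "x \<in> \<Omega>")
    case True
    have "((\<lambda>x. \<phi> x *\<^sub>R V x) has_derivative (\<lambda>h. (d\<phi> x \<bullet> h) *\<^sub>R V x + \<phi> x *\<^sub>R D x h)) (at x)"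
      using prod True unfolding C1V_def by blast
    then have "(\<psi> has_derivative (\<lambda>h. (d\<phi> x \<bullet> h) *\<^sub>R V x + \<phi> x *\<^sub>R D x h)) (at x)"
      by (rule has_derivative_transform_within_open[OF _ \<Omega>(1) True]) (simp add: \<psi>_def)
    moreover have "\<psi>' x = (\<lambda>h. (d\<phi> x \<bullet> h) *\<^sub>R V x + \<phi> x *\<^sub>R D x h)"
      using True by (simp add: \<psi>'_def fun_eq_iff)
    ultimately show ?thesis by simp
  next
    case False
    have "((\<lambda>_. 0) has_derivative (\<lambda>h. 0)) (at x)" by simp
    then have "(\<psi> has_derivative (\<lambda>h. 0)) (at x)"
      by (rule has_derivative_transform_within_open[OF _ N NO[OF False]]) (auto simp: \<psi>_def phiN)
    moreover have "\<psi>' x = (\<lambda>h. 0)" using False by (simp add: \<psi>'_def fun_eq_iff)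
    ultimately show ?thesis by simp
  qed
  have cont: "continuous_on UNIV (\<lambda>x. \<psi>' x i)" if i: "i \<in> Basis" for i
    unfolding continuous_on_eq_continuous_at[OF open_UNIV]
  proof
    fix x :: 'a
    show "isCont (\<lambda>x. \<psi>' x i) x"
    proof (cases "x \<in> \<Omega>")
      case True
      have "continuous_on \<Omega> (\<lambda>x. (d\<phi> x \<bullet> i) *\<^sub>R V x + \<phi> x *\<^sub>R D x i)"
        using prod i unfolding C1V_def by blast
      then have "isCont (\<lambda>x. (d\<phi> x \<bullet> i) *\<^sub>R V x + \<phi> x *\<^sub>R D x i) x"
        using continuous_on_eq_continuous_at[OF \<Omega>(1)] True by blast
      then show ?thesis
        by (rule isCont_local[OF \<Omega>(1) True, rotated]) (simp add: \<psi>'_def)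
    next
      case False
      show ?thesis
        by (rule isCont_local[OF N NO[OF False], where g="\<lambda>_. 0"]) (auto simp: \<psi>'_def phiN)
    qed
  qed
  define S where "S = {x. \<rho> x \<le> - \<epsilon>}"
  have SO: "S \<subseteq> \<Omega>" using eps \<Omega>(3) unfolding S_def by auto
  have "closed S" unfolding S_def by (rule closed_Collect_le) (auto intro: rhoc)
  then have Sc: "compact S" using SO \<Omega>(2) bounded_subset compact_eq_bounded_closed by blast
  have psi0: "\<psi> x = 0" if "x \<notin> S" for x
  proof (cases "x \<in> \<Omega>")
    case True
    then have "x \<in> N" using that unfolding S_def N_def by auto
    then show ?thesis by (simp add: \<psi>_def phiN)
  qed (simp add: \<psi>_def)
  have I: "((\<lambda>x. \<Sum>i\<in>Basis. \<psi>' x i \<bullet> i) has_integral 0) UNIV"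
    by (rule core[OF der cont Sc psi0])
  have eq: "(\<Sum>i\<in>Basis. \<psi>' x i \<bullet> i) =
      (if x \<in> \<Omega> then chi (\<rho> x / \<epsilon>) * (\<Sum>i\<in>Basis. D x i \<bullet> i) + dchi (\<rho> x / \<epsilon>) / \<epsilon> * (g x \<bullet> V x) else 0)" for x
  proof (cases "x \<in> \<Omega>")
    case True
    have "(\<Sum>i\<in>Basis. \<psi>' x i \<bullet> i) = (\<Sum>i\<in>Basis. (d\<phi> x \<bullet> i) * (V x \<bullet> i)) + \<phi> x * (\<Sum>i\<in>Basis. D x i \<bullet> i)"
      using True by (simp add: \<psi>'_def sum.distrib sum_distrib_left inner_add_left)
    also have "(\<Sum>i\<in>Basis. (d\<phi> x \<bullet> i) * (V x \<bullet> i)) = d\<phi> x \<bullet> V x"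
      by (rule euclidean_inner[symmetric])
    finally show ?thesis using True by (simp add: d\<phi>_def \<phi>_def)
  qed (simp add: \<psi>'_def)
  show ?thesis
    using I unfolding eq has_integral_restrict_UNIV .
qed

lemma intcl:
  fixes h :: "'a::euclidean_space \<Rightarrow> real"
  assumes "open \<Omega>" "bounded \<Omega>" "continuous_on (closure \<Omega>) h"
  shows "h integrable_on \<Omega>"
proof -
  have cc: "compact (closure \<Omega>)" using assms(2) by simp
  obtain B where B: "\<forall>x\<in>closure \<Omega>. norm (h x) \<le> B"
    using compact_imp_bounded[OF compact_continuous_image[OF assms(3) cc]] unfolding bounded_iff by auto
  have L: "\<Omega> \<in> lmeasurable" using lmeasurable_open assms(1,2) by blast
  have hc: "continuous_on \<Omega> h" using assms(3) closure_subset continuous_on_subset by blast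
  show ?thesis
  proof (rule measurable_bounded_by_integrable_imp_integrable[where g="\<lambda>_. B"])
    show "\<Omega> \<in> sets lebesgue" using L by (rule fmeasurableD)
    then show "h \<in> borel_measurable (lebesgue_on \<Omega>)"
      by (rule continuous_imp_measurable_on_sets_lebesgue[OF hc])
    show "(\<lambda>_. B) integrable_on \<Omega>" using L by (rule integrable_on_const)
    show "norm (h x) \<le> B" if "x \<in> \<Omega>" for x using B closure_subset that by blast
  qed
qed

lemma div_zero:
  fixes \<Omega> :: "'a::euclidean_space set" and \<rho> :: "'a \<Rightarrow> real"
  assumes \<Omega>: "open \<Omega>" "bounded \<Omega>" "\<Omega> = {x. \<rho> x < 0}" "frontier \<Omega> = {x. \<rho> x = 0}"
    and rho: "C1R \<rho> g UNIV" and H: "C1V g H UNIV" and gnz: "\<And>x. x \<in> frontier \<Omega> \<Longrightarrow> g x \<noteq> 0"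
    and V: "C1V V D \<Omega>" and W: "continuous_on (closure \<Omega>) W" and WV: "\<And>x. x \<in> \<Omega> \<Longrightarrow> W x = V x"
    and Wn: "\<And>x. x \<in> frontier \<Omega> \<Longrightarrow> W x \<bullet> g x = 0"
    and f: "continuous_on (closure \<Omega>) f" and fD: "\<And>x. x \<in> \<Omega> \<Longrightarrow> f x = (\<Sum>i\<in>Basis. D x i \<bullet> i)"
  shows "(f has_integral 0) \<Omega>"
proof -
  have rhoc: "continuous_on UNIV \<rho>" using C1R_cont[OF rho] .
  have gc: "continuous_on UNIV g" using rho unfolding C1R_def by blast
  have clO: "closure \<Omega> \<subseteq> {x. \<rho> x \<le> 0}"
    by (rule closure_minimal) (use \<Omega>(3) in auto, rule closed_Collect_le, auto intro: rhoc)
  have cc: "compact (closure \<Omega>)" using \<Omega>(2) by simp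
  have fr: "x \<in> frontier \<Omega>" if "\<rho> x = 0" for x using that \<Omega>(4) by auto
  have OclO: "\<Omega> \<subseteq> closure \<Omega>" by (rule closure_subset)
  have cfr: "compact (frontier \<Omega>)" using \<Omega>(2) by (rule compact_frontier_bounded)
  obtain c where c: "c > 0" "\<And>x. x \<in> frontier \<Omega> \<Longrightarrow> c \<le> g x \<bullet> g x"
  proof -
    have "\<exists>e>0. \<forall>x\<in>frontier \<Omega>. - (g x \<bullet> g x) \<le> -e"
      by (rule neg_on_compact[OF cfr]) (use gnz in \<open>auto intro!: continuous_intros continuous_on_subset[OF gc]\<close>)
    then show ?thesis using that by force
  qed
  define C1 where "C1 = closure \<Omega> \<inter> (\<lambda>x. g x \<bullet> g x) -` {..c/2}"
  have "closed C1" unfolding C1_def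
    by (rule continuous_closed_preimage) (auto intro!: continuous_intros continuous_on_subset[OF gc])
  moreover have "closure \<Omega> \<inter> C1 = C1" by (auto simp: C1_def)
  ultimately have C1c: "compact C1" using compact_Int_closed[OF cc, of C1] by simp
  obtain e1 where e1: "e1 > 0" "\<And>x. x \<in> C1 \<Longrightarrow> \<rho> x \<le> - e1"
  proof -
    have "\<exists>e>0. \<forall>x\<in>C1. \<rho> x \<le> -e"
    proof (rule neg_on_compact[OF C1c])
      show "continuous_on C1 \<rho>" using rhoc continuous_on_subset by blast
      fix x assume x: "x \<in> C1"
      then have "\<rho> x \<le> 0" using clO unfolding C1_def by auto
      moreover have "\<rho> x \<noteq> 0"
      proof
        assume "\<rho> x = 0"
        then have "c \<le> g x \<bullet> g x" using c(2) fr by blast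
        then show False using x c(1) unfolding C1_def by auto
      qed
      ultimately show "\<rho> x < 0" by simp
    qed
    then show ?thesis using that by blast
  qed
  have L1: "c/2 < g x \<bullet> g x" if "x \<in> closure \<Omega>" "- e1 < \<rho> x" for x
  proof (rule ccontr)
    assume "\<not> c/2 < g x \<bullet> g x"
    then have "x \<in> C1" using that unfolding C1_def by auto
    then show False using e1(2)[of x] that(2) by linarith
  qed
  have L2: "\<exists>e>0. \<forall>x\<in>closure \<Omega>. - e < \<rho> x \<longrightarrow> \<bar>W x \<bullet> g x\<bar> < \<delta>" if \<delta>: "\<delta> > 0" for \<delta>
  proof -
    define C2 where "C2 = closure \<Omega> \<inter> (\<lambda>x. \<bar>W x \<bullet> g x\<bar>) -` {\<delta>..}"
    have "closed C2" unfolding C2_def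
      by (rule continuous_closed_preimage) (auto intro!: continuous_intros W continuous_on_subset[OF gc])
    moreover have "closure \<Omega> \<inter> C2 = C2" by (auto simp: C2_def)
    ultimately have C2c: "compact C2" using compact_Int_closed[OF cc, of C2] by simp
    have "\<exists>e>0. \<forall>x\<in>C2. \<rho> x \<le> -e"
    proof (rule neg_on_compact[OF C2c])
      show "continuous_on C2 \<rho>" using rhoc continuous_on_subset by blast
      fix x assume x: "x \<in> C2"
      then have "\<rho> x \<le> 0" using clO unfolding C2_def by auto
      moreover have "\<rho> x \<noteq> 0"
      proof
        assume "\<rho> x = 0"
        then have "W x \<bullet> g x = 0" using Wn fr by blast
        then show False using x \<delta> unfolding C2_def by auto
      qed
      ultimately show "\<rho> x < 0" by simp
    qed
    then obtain e where e: "e > 0" "\<And>x. x \<in> C2 \<Longrightarrow> \<rho> x \<le> -e" by blast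
    show ?thesis
    proof (intro exI[of _ e] conjI ballI impI)
      fix x assume x: "x \<in> closure \<Omega>" "- e < \<rho> x"
      show "\<bar>W x \<bullet> g x\<bar> < \<delta>"
      proof (rule ccontr)
        assume "\<not> \<bar>W x \<bullet> g x\<bar> < \<delta>"
        then have "x \<in> C2" using x unfolding C2_def by auto
        then show False using e(2)[of x] x(2) by linarith
      qed
    qed (rule e(1))
  qed
  define \<epsilon> where "\<epsilon> n = inverse (real (Suc n))" for n
  have epos: "\<epsilon> n > 0" for n unfolding \<epsilon>_def by simp
  have emono: "\<epsilon> n \<le> \<epsilon> N" if "N \<le> n" for n N
    unfolding \<epsilon>_def using that by (simp add: le_imp_inverse_le)
  define \<phi> where "\<phi> n x = chi (\<rho> x / \<epsilon> n)" for n x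
  define k where "k n x = - dchi (\<rho> x / \<epsilon> n) / \<epsilon> n" for n x
  define q where "q x = g x \<bullet> g x" for x
  define \<Delta> where "\<Delta> x = (\<Sum>i\<in>Basis. H x i \<bullet> i)" for x
  have phic: "continuous_on UNIV (\<phi> n)" for n
    unfolding \<phi>_def[abs_def]
  proof -
    have cchi: "continuous_on UNIV chi"
      using chi_deriv by (intro continuous_at_imp_continuous_on ballI DERIV_isCont) blast
    show "continuous_on UNIV (\<lambda>x. chi (\<rho> x / \<epsilon> n))"
      by (rule continuous_on_compose2[OF cchi]) (use epos[of n] in \<open>auto intro!: continuous_intros rhoc\<close>)
  qed
  have kc: "continuous_on UNIV (k n)" for n
  proof -
    have "continuous_on UNIV (\<lambda>x. dchi (\<rho> x / \<epsilon> n))"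
      by (rule continuous_on_compose2[OF dchi_cont]) (use epos[of n] in \<open>auto intro!: continuous_intros rhoc\<close>)
    then show ?thesis unfolding k_def[abs_def] using epos[of n] by (intro continuous_intros) auto
  qed
  have qc: "continuous_on UNIV q" unfolding q_def[abs_def] by (intro continuous_intros gc)
  have Dc: "continuous_on UNIV \<Delta>" unfolding \<Delta>_def[abs_def]
    using H unfolding C1V_def by (intro continuous_intros) auto
  have Wgc: "continuous_on (closure \<Omega>) (\<lambda>x. W x \<bullet> g x)"
    by (intro continuous_intros W continuous_on_subset[OF gc]) auto
  have knn: "k n x \<ge> 0" for n x unfolding k_def using dchi_nonpos[of "\<rho> x / \<epsilon> n"] epos[of n]
    by (simp add: divide_nonpos_pos)
  have ksupp: "- 2 * \<epsilon> n < \<rho> x" if "k n x \<noteq> 0" for n x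
  proof -
    have "dchi (\<rho> x / \<epsilon> n) \<noteq> 0" using that unfolding k_def by auto
    then have "-2 < \<rho> x / \<epsilon> n" using dchi_supp by blast
    then show ?thesis using epos[of n] by (simp add: field_simps)
  qed
  have phib: "0 \<le> \<phi> n x" "\<phi> n x \<le> 1" for n x unfolding \<phi>_def using chi_bounds by auto
  have IC: "h integrable_on \<Omega>" if "continuous_on (closure \<Omega>) h" for h :: "'a \<Rightarrow> real"
    using intcl[OF \<Omega>(1,2) that] .
  have CU: "continuous_on (closure \<Omega>) h" if "continuous_on UNIV h" for h :: "'a \<Rightarrow> real"
    using that continuous_on_subset by blast
  have i_f: "f integrable_on \<Omega>" by (rule IC[OF f])
  have i_af: "(\<lambda>x. \<bar>f x\<bar>) integrable_on \<Omega>" by (rule IC) (intro continuous_intros f)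
  have i_pf: "(\<lambda>x. \<phi> n x * f x) integrable_on \<Omega>" for n by (rule IC) (intro continuous_intros f CU[OF phic])
  have i_aD: "(\<lambda>x. \<bar>\<Delta> x\<bar>) integrable_on \<Omega>" by (rule IC) (intro continuous_intros CU[OF Dc])
  have i_pD: "(\<lambda>x. \<phi> n x * \<Delta> x) integrable_on \<Omega>" for n by (rule IC) (intro continuous_intros CU[OF Dc] CU[OF phic])
  have i_k: "k n integrable_on \<Omega>" for n by (rule IC[OF CU[OF kc]])
  have i_kq: "(\<lambda>x. k n x * q x) integrable_on \<Omega>" for n by (rule IC) (intro continuous_intros CU[OF kc] CU[OF qc])
  have i_kW: "(\<lambda>x. k n x * (W x \<bullet> g x)) integrable_on \<Omega>" for n by (rule IC) (intro continuous_intros CU[OF kc] Wgc)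
  have H': "C1V g H \<Omega>" using C1V_mono[OF H] by blast
  have cut2: "integral \<Omega> (\<lambda>x. \<phi> n x * \<Delta> x) = integral \<Omega> (\<lambda>x. k n x * q x)" for n
  proof -
    have "((\<lambda>x. chi (\<rho> x / \<epsilon> n) * (\<Sum>i\<in>Basis. H x i \<bullet> i) + dchi (\<rho> x / \<epsilon> n) / \<epsilon> n * (g x \<bullet> g x)) has_integral 0) \<Omega>"
      by (rule cut[OF \<Omega>(1,2,3) rho epos H'])
    moreover have "(\<lambda>x. chi (\<rho> x / \<epsilon> n) * (\<Sum>i\<in>Basis. H x i \<bullet> i) + dchi (\<rho> x / \<epsilon> n) / \<epsilon> n * (g x \<bullet> g x))
        = (\<lambda>x. \<phi> n x * \<Delta> x - k n x * q x)"
      by (auto simp: fun_eq_iff \<phi>_def \<Delta>_def k_def q_def)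
    ultimately have "integral \<Omega> (\<lambda>x. \<phi> n x * \<Delta> x - k n x * q x) = 0" by (simp add: integral_unique)
    then show ?thesis using Henstock_Kurzweil_Integration.integral_diff[OF i_pD i_kq] by simp
  qed
  have cut1: "integral \<Omega> (\<lambda>x. \<phi> n x * f x) = integral \<Omega> (\<lambda>x. k n x * (W x \<bullet> g x))" for n
  proof -
    have h0: "((\<lambda>x. chi (\<rho> x / \<epsilon> n) * (\<Sum>i\<in>Basis. D x i \<bullet> i) + dchi (\<rho> x / \<epsilon> n) / \<epsilon> n * (g x \<bullet> V x)) has_integral 0) \<Omega>"
      by (rule cut[OF \<Omega>(1,2,3) rho epos V])
    have "((\<lambda>x. \<phi> n x * f x - k n x * (W x \<bullet> g x)) has_integral 0) \<Omega>"
      by (rule has_integral_eq[OF _ h0]) (simp add: \<phi>_def k_def fD WV inner_commute)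
    then have "integral \<Omega> (\<lambda>x. \<phi> n x * f x - k n x * (W x \<bullet> g x)) = 0" by (rule integral_unique)
    then show ?thesis using Henstock_Kurzweil_Integration.integral_diff[OF i_pf i_kW] by simp
  qed
  define M where "M = integral \<Omega> (\<lambda>x. \<bar>\<Delta> x\<bar>)"
  have M0: "M \<ge> 0" unfolding M_def by (rule Henstock_Kurzweil_Integration.integral_nonneg[OF i_aD]) simp
  have I1M: "integral \<Omega> (\<lambda>x. \<phi> n x * \<Delta> x) \<le> M" for n
    unfolding M_def
  proof (rule integral_le[OF i_pD i_aD])
    fix x
    have "\<phi> n x * \<Delta> x \<le> \<phi> n x * \<bar>\<Delta> x\<bar>" using phib by (simp add: mult_left_mono)
    also have "\<dots> \<le> 1 * \<bar>\<Delta> x\<bar>" using phib by (intro mult_right_mono) auto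
    finally show "\<phi> n x * \<Delta> x \<le> \<bar>\<Delta> x\<bar>" by simp
  qed
  have Kb: "integral \<Omega> (k n) \<le> 2 * M / c" if n: "2 * \<epsilon> n \<le> e1" for n
  proof -
    have "integral \<Omega> (\<lambda>x. c/2 * k n x) \<le> integral \<Omega> (\<lambda>x. k n x * q x)"
    proof (rule integral_le)
      show "(\<lambda>x. c / 2 * k n x) integrable_on \<Omega>" using i_k by (rule integrable_on_mult_right)
      show "(\<lambda>x. k n x * q x) integrable_on \<Omega>" by (rule i_kq)
      fix x assume x: "x \<in> \<Omega>"
      show "c / 2 * k n x \<le> k n x * q x"
      proof (cases "k n x = 0")
        case False
        then have "- e1 < \<rho> x" using ksupp[OF False] n by linarith
        then have "c/2 < q x" unfolding q_def using L1 x OclO by blast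
        then have "c/2 * k n x \<le> q x * k n x" using knn[of n x] by (intro mult_right_mono) auto
        then show ?thesis by (simp add: mult.commute)
      qed simp
    qed
    also have "\<dots> \<le> M" using cut2[of n] I1M[of n] by simp
    finally have "c/2 * integral \<Omega> (k n) \<le> M"
      using integral_mult[OF i_k, of "c/2"] by simp
    then show ?thesis using c(1) by (simp add: field_simps)
  qed
  have Ab: "\<bar>integral \<Omega> (\<lambda>x. \<phi> n x * f x)\<bar> \<le> \<delta> * (2 * M / c)"
    if \<delta>: "\<delta> > 0" and e: "\<forall>x\<in>closure \<Omega>. - e < \<rho> x \<longrightarrow> \<bar>W x \<bullet> g x\<bar> < \<delta>"
      and n: "2 * \<epsilon> n \<le> e1" "2 * \<epsilon> n \<le> e" for n \<delta> e
  proof -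
    have "norm (integral \<Omega> (\<lambda>x. k n x * (W x \<bullet> g x))) \<le> integral \<Omega> (\<lambda>x. \<delta> * k n x)"
    proof (rule Henstock_Kurzweil_Integration.integral_norm_bound_integral[OF i_kW])
      show "(\<lambda>x. \<delta> * k n x) integrable_on \<Omega>" using i_k by (rule integrable_on_mult_right)
      fix x assume x: "x \<in> \<Omega>"
      show "norm (k n x * (W x \<bullet> g x)) \<le> \<delta> * k n x"
      proof (cases "k n x = 0")
        case False
        then have "- e < \<rho> x" using ksupp[OF False] n by linarith
        then have "\<bar>W x \<bullet> g x\<bar> < \<delta>" using e x OclO by blast
        then have "\<bar>W x \<bullet> g x\<bar> * k n x \<le> \<delta> * k n x" using knn[of n x] by (intro mult_right_mono) auto
        then show ?thesis using knn[of n x] by (simp add: abs_mult mult.commute)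
      qed simp
    qed
    also have "\<dots> = \<delta> * integral \<Omega> (k n)" using integral_mult[OF i_k, of \<delta>] by simp
    also have "\<dots> \<le> \<delta> * (2 * M / c)" using Kb[OF n(1)] \<delta> by (intro mult_left_mono) auto
    finally show ?thesis using cut1[of n] by simp
  qed
  have A0: "(\<lambda>n. integral \<Omega> (\<lambda>x. \<phi> n x * f x)) \<longlonglongrightarrow> 0"
  proof (rule LIMSEQ_I)
    fix r :: real assume r: "r > 0"
    define \<delta> where "\<delta> = r * c / (2 * (2 * M + 1))"
    have \<delta>: "\<delta> > 0" unfolding \<delta>_def using r c(1) M0 by simp
    obtain e where e: "e > 0" "\<forall>x\<in>closure \<Omega>. - e < \<rho> x \<longrightarrow> \<bar>W x \<bullet> g x\<bar> < \<delta>"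
      using L2[OF \<delta>] by blast
    obtain N where N: "inverse (real (Suc N)) < min (e1/2) (e/2)"
      using reals_Archimedean[of "min (e1/2) (e/2)"] e(1) e1(1) by auto
    have "\<delta> * (2 * M / c) < r"
    proof -
      have "\<delta> * (2 * M / c) = r * (M / (2 * M + 1))" unfolding \<delta>_def using c(1) M0 by (simp add: field_simps)
      also have "\<dots> < r * 1" using r M0 by (intro mult_strict_left_mono) auto
      finally show ?thesis by simp
    qed
    moreover have "\<bar>integral \<Omega> (\<lambda>x. \<phi> n x * f x)\<bar> \<le> \<delta> * (2 * M / c)" if "n \<ge> N" for n
    proof (rule Ab[OF \<delta> e(2)])
      have a: "\<epsilon> n \<le> \<epsilon> N" by (rule emono[OF that])
      have b: "\<epsilon> N < min (e1/2) (e/2)" using N unfolding \<epsilon>_def .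
      show "2 * \<epsilon> n \<le> e1" "2 * \<epsilon> n \<le> e" using a b by auto
    qed
    ultimately show "\<exists>no. \<forall>n\<ge>no. norm (integral \<Omega> (\<lambda>x. \<phi> n x * f x) - 0) < r"
    proof (intro exI[of _ N] allI impI)
      fix n assume "N \<le> n"
      assume a: "\<delta> * (2 * M / c) < r" and b: "\<And>n. N \<le> n \<Longrightarrow> \<bar>integral \<Omega> (\<lambda>x. \<phi> n x * f x)\<bar> \<le> \<delta> * (2 * M / c)"
      show "norm (integral \<Omega> (\<lambda>x. \<phi> n x * f x) - 0) < r" using a b[OF \<open>N \<le> n\<close>] by simp
    qed
  qed
  have conv: "(\<lambda>n. integral \<Omega> (\<lambda>x. \<phi> n x * f x)) \<longlonglongrightarrow> integral \<Omega> f"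
  proof (rule dominated_convergence(2)[OF i_pf i_af])
    fix n x assume "x \<in> \<Omega>"
    show "norm (\<phi> n x * f x) \<le> \<bar>f x\<bar>"
      using phib[of n x] by (simp add: abs_mult mult_left_le_one_le)
  next
    fix x assume x: "x \<in> \<Omega>"
    then have rx: "\<rho> x < 0" using \<Omega>(3) by auto
    obtain N where N: "inverse (real (Suc N)) < - \<rho> x / 2"
      using reals_Archimedean[of "- \<rho> x / 2"] rx by auto
    have "\<phi> n x * f x = f x" if "n \<ge> N" for n
    proof -
      have "\<epsilon> n < - \<rho> x / 2" using emono[OF that] N unfolding \<epsilon>_def by linarith
      then have "\<rho> x / \<epsilon> n \<le> -2" using epos[of n] rx by (simp add: field_simps)
      then show ?thesis unfolding \<phi>_def by (simp add: chi_one)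
    qed
    then show "(\<lambda>n. \<phi> n x * f x) \<longlonglongrightarrow> f x"
      by (intro tendsto_eventually) (auto simp: eventually_sequentially)
  qed
  have "integral \<Omega> f = 0" using LIMSEQ_unique[OF conv A0] .
  then show ?thesis using integrable_integral[OF i_f] by simp
qed

lemma int_pos:
  fixes h :: "'a::euclidean_space \<Rightarrow> real"
  assumes "open \<Omega>" "x0 \<in> \<Omega>" "continuous_on \<Omega> h" "h integrable_on \<Omega>"
    "\<And>x. x \<in> \<Omega> \<Longrightarrow> 0 \<le> h x" "h x0 > 0"
  shows "integral \<Omega> h > 0"
proof -
  have ci: "\<forall>x\<in>\<Omega>. \<forall>e>0. \<exists>d>0. \<forall>y\<in>\<Omega>. dist y x < d \<longrightarrow> dist (h y) (h x) < e"
    using assms(3) unfolding continuous_on_iff .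
  have h2: "h x0 / 2 > 0" using assms(6) by simp
  obtain d where d: "d > 0" "\<forall>y\<in>\<Omega>. dist y x0 < d \<longrightarrow> dist (h y) (h x0) < h x0 / 2"
    using ci assms(2) h2 by blast
  obtain d2 where d2: "d2 > 0" "ball x0 d2 \<subseteq> \<Omega>" using assms(1,2) open_contains_ball by blast
  define d3 where "d3 = min d d2"
  define s where "s = d3 / (2 * real DIM('a))"
  have d3: "d3 > 0" using d d2 by (simp add: d3_def)
  have s: "s > 0" using d3 by (simp add: s_def)
  define B where "B = cbox (x0 - s *\<^sub>R One) (x0 + s *\<^sub>R One)"
  have Bb: "dist y x0 < d3" if "y \<in> B" for y
  proof -
    have "\<bar>(y - x0) \<bullet> i\<bar> \<le> s" if i: "i \<in> Basis" for i
      using \<open>y \<in> B\<close> i unfolding B_def mem_box by (auto simp: inner_diff_left inner_add_left abs_le_iff algebra_simps)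
    then have "(\<Sum>i\<in>Basis. \<bar>(y - x0) \<bullet> i\<bar>) \<le> (\<Sum>i\<in>(Basis::'a set). s)" by (rule sum_mono)
    also have "\<dots> = d3 / 2" unfolding s_def by simp
    finally have "norm (y - x0) \<le> d3 / 2" using norm_le_l1[of "y - x0"] by linarith
    then show ?thesis using d3 by (simp add: dist_norm)
  qed
  have BO: "B \<subseteq> \<Omega>"
  proof
    fix y assume "y \<in> B"
    then have "dist x0 y < d2" using Bb[of y] unfolding d3_def by (simp add: dist_commute)
    then have "y \<in> ball x0 d2" by simp
    then show "y \<in> \<Omega>" using d2(2) by blast
  qed
  have hB: "h x0 / 2 \<le> h y" if "y \<in> B" for y
  proof -
    have "dist (h y) (h x0) < h x0 / 2" using d(2) Bb[OF that] BO that unfolding d3_def by auto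
    then show ?thesis unfolding dist_real_def by linarith
  qed
  have cB: "measure lborel B > 0" unfolding B_def using s by (intro content_pos_lt) (auto simp: inner_diff_left inner_add_left)
  have "((\<lambda>y. if y \<in> B then h x0 / 2 else 0) has_integral (measure lborel B *\<^sub>R (h x0 / 2))) \<Omega>"
    using has_integral_const[of "h x0 / 2" "x0 - s *\<^sub>R One" "x0 + s *\<^sub>R One"] BO unfolding B_def by simp
  then have "measure lborel B * (h x0 / 2) = integral \<Omega> (\<lambda>y. if y \<in> B then h x0 / 2 else 0)"
    by (simp add: integral_unique)
  also have "\<dots> \<le> integral \<Omega> h"
    by (rule integral_le) (use \<open>(_ has_integral _) \<Omega>\<close> assms(4,5) hB in auto)
  finally have "measure lborel B * (h x0 / 2) \<le> integral \<Omega> h" .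
  moreover have "measure lborel B * (h x0 / 2) > 0" using cB h2 by simp
  ultimately show ?thesis by linarith
qed

theorem lemma3:
  fixes \<Omega> :: "'a::euclidean_space set"
    and \<beta> :: real
    and \<rho> r a1 P K u :: "'a \<Rightarrow> real"
  assumes dom: "open \<Omega>" "bounded \<Omega>" "connected \<Omega>" "\<Omega> \<noteq> {}"
    and bdry: "0 < \<beta>" "C2beta_defining_fun \<Omega> \<beta> \<rho>"
    and cont: "continuous_on (closure \<Omega>) r" "continuous_on (closure \<Omega>) a1"
              "continuous_on (closure \<Omega>) P" "continuous_on (closure \<Omega>) K"
    and pos: "\<And>x. x \<in> closure \<Omega> \<Longrightarrow> r x > 0" "\<And>x. x \<in> closure \<Omega> \<Longrightarrow> a1 x > 0"
             "\<And>x. x \<in> closure \<Omega> \<Longrightarrow> P x > 0" "\<And>x. x \<in> closure \<Omega> \<Longrightarrow> K x > 0"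
    and reg: "C2_on a1 \<Omega>" "C2_on P \<Omega>" "C2_on K \<Omega>"
    and u_reg: "C2_on u \<Omega>" "continuous_on (closure \<Omega>) u"
    and u_pos: "\<And>x. x \<in> \<Omega> \<Longrightarrow> u x > 0"
    and u_eq: "\<And>x. x \<in> \<Omega> \<Longrightarrow>
        divg (\<lambda>y. a1 y *\<^sub>R grad (\<lambda>z. u z / P z) y) x + r x * u x * (1 - u x / K x) = 0"
    and u_neumann: "\<exists>G. continuous_on (closure \<Omega>) G \<and>
        (\<forall>x\<in>\<Omega>. G x = grad (\<lambda>z. u z / P z) x) \<and>
        (\<forall>x\<in>frontier \<Omega>. G x \<bullet> outward_normal \<rho> x = 0)"
    and nontriv: "\<exists>x\<in>\<Omega>. divg (\<lambda>y. a1 y *\<^sub>R grad (\<lambda>z. K z / P z) y) x \<noteq> 0"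
  shows "integral \<Omega> (\<lambda>x. r x * K x) > integral \<Omega> (\<lambda>x. r x * u x)"
proof -
  obtain gr Hr where grH: "C2_with \<rho> UNIV gr Hr" and Oeq: "\<Omega> = {x. \<rho> x < 0}"
    and fro: "frontier \<Omega> = {x. \<rho> x = 0}" and gnz0: "\<forall>x\<in>frontier \<Omega>. grad \<rho> x \<noteq> 0"
    using bdry(2) unfolding C2beta_defining_fun_def by blast
  have rho: "C1R \<rho> gr UNIV" and Hr: "C1V gr Hr UNIV" using C2_with_C1[OF grH] by auto
  have gradr: "grad \<rho> x = gr x" for x using rho unfolding C1R_def by (auto intro: grad_eq)
  have gnz: "gr x \<noteq> 0" if "x \<in> frontier \<Omega>" for x using gnz0 gradr that by auto
  obtain ga Ha where "C2_with a1 \<Omega> ga Ha" using reg(1) unfolding C2_on_def by blast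
  then have a1C: "C1R a1 ga \<Omega>" by (rule C2_with_C1(1))
  obtain gP HP where gPH: "C2_with P \<Omega> gP HP" using reg(2) unfolding C2_on_def by blast
  have PC: "C1R P gP \<Omega>" and gPC: "C1V gP HP \<Omega>" using C2_with_C1[OF gPH] by auto
  obtain gu Hu where guH: "C2_with u \<Omega> gu Hu" using u_reg(1) unfolding C2_on_def by blast
  have uC: "C1R u gu \<Omega>" and guC: "C1V gu Hu \<Omega>" using C2_with_C1[OF guH] by auto
  have OclO: "\<Omega> \<subseteq> closure \<Omega>" by (rule closure_subset)
  have Pnz: "P x \<noteq> 0" if "x \<in> \<Omega>" for x using pos(3)[of x] OclO that by auto
  have Knz: "K x \<noteq> 0" if "x \<in> closure \<Omega>" for x using pos(4)[of x] that by auto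
  have qC: "C1R (\<lambda>x. inverse (P x)) (\<lambda>x. (- (inverse (P x) * inverse (P x))) *\<^sub>R gP x) \<Omega>"
    by (rule C1R_inverse[OF PC Pnz])
  obtain gc where cC: "C1R (\<lambda>x. - (inverse (P x) * inverse (P x))) gc \<Omega>"
    using C1R_minus[OF C1R_mult[OF qC qC]] by blast
  obtain Dq where DqC: "C1V (\<lambda>x. (- (inverse (P x) * inverse (P x))) *\<^sub>R gP x) Dq \<Omega>"
    using C1V_scaleR[OF cC gPC] by blast
  define gw where "gw x = u x *\<^sub>R ((- (inverse (P x) * inverse (P x))) *\<^sub>R gP x) + inverse (P x) *\<^sub>R gu x" for x
  have wC: "C1R (\<lambda>x. u x * inverse (P x)) gw \<Omega>"
    unfolding gw_def[abs_def] by (rule C1R_mult[OF uC qC])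
  obtain Dw where DwC: "C1V gw Dw \<Omega>"
    using C1V_add[OF C1V_scaleR[OF uC DqC] C1V_scaleR[OF qC guC]] unfolding gw_def[abs_def] by blast
  obtain DF where DFC: "C1V (\<lambda>x. a1 x *\<^sub>R gw x) DF \<Omega>"
    using C1V_scaleR[OF a1C DwC] by blast
  have weq: "(\<lambda>z. u z / P z) = (\<lambda>z. u z * inverse (P z))" by (simp add: fun_eq_iff divide_inverse)
  have gradw: "grad (\<lambda>z. u z / P z) x = gw x" if "x \<in> \<Omega>" for x
    unfolding weq by (rule grad_eq) (use wC that in \<open>auto simp: C1R_def\<close>)
  obtain G where Gc: "continuous_on (closure \<Omega>) G" and G\<Omega>: "\<forall>x\<in>\<Omega>. G x = grad (\<lambda>z. u z / P z) x"
    and Gn: "\<forall>x\<in>frontier \<Omega>. G x \<bullet> outward_normal \<rho> x = 0"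
    using u_neumann by blast
  define W where "W x = a1 x *\<^sub>R G x" for x
  have Wc: "continuous_on (closure \<Omega>) W" unfolding W_def[abs_def] by (intro continuous_intros cont(2) Gc)
  have WV: "W x = a1 x *\<^sub>R gw x" if "x \<in> \<Omega>" for x using G\<Omega> gradw that unfolding W_def by auto
  have Wn: "W x \<bullet> gr x = 0" if x: "x \<in> frontier \<Omega>" for x
  proof -
    have "G x \<bullet> outward_normal \<rho> x = 0" using Gn x by blast
    then have "G x \<bullet> (gr x /\<^sub>R norm (gr x)) = 0" unfolding outward_normal_def gradr .
    then have "G x \<bullet> gr x = 0" using gnz[OF x] by auto
    then show ?thesis unfolding W_def by simp
  qed
  define f where "f x = - (r x * u x * (1 - u x / K x))" for x
  have fc: "continuous_on (closure \<Omega>) f" unfolding f_def[abs_def]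
    by (intro continuous_intros cont(1) cont(4) u_reg(2)) (use Knz in auto)
  have fD: "f x = (\<Sum>i\<in>Basis. DF x i \<bullet> i)" if x: "x \<in> \<Omega>" for x
  proof -
    have "divg (\<lambda>y. a1 y *\<^sub>R grad (\<lambda>z. u z / P z) y) x = divg (\<lambda>y. a1 y *\<^sub>R gw y) x"
      by (rule divg_local[OF dom(1) x]) (simp add: gradw)
    also have "\<dots> = (\<Sum>i\<in>Basis. DF x i \<bullet> i)"
      by (rule divg_eq) (use DFC x in \<open>auto simp: C1V_def\<close>)
    finally show ?thesis using u_eq[OF x] unfolding f_def by linarith
  qed
  have int0: "(f has_integral 0) \<Omega>"
    by (rule div_zero[OF dom(1,2) Oeq fro rho Hr gnz DFC Wc WV Wn fc fD])
  obtain x0 where x0: "x0 \<in> \<Omega>" "u x0 \<noteq> K x0"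
  proof (rule ccontr)
    assume "\<not> thesis"
    with that have uK: "u x = K x" if "x \<in> \<Omega>" for x using that by blast
    obtain x1 where x1: "x1 \<in> \<Omega>" "divg (\<lambda>y. a1 y *\<^sub>R grad (\<lambda>z. K z / P z) y) x1 \<noteq> 0"
      using nontriv by blast
    have "divg (\<lambda>y. a1 y *\<^sub>R grad (\<lambda>z. K z / P z) y) x1 = divg (\<lambda>y. a1 y *\<^sub>R grad (\<lambda>z. u z / P z) y) x1"
    proof (rule divg_local[OF dom(1) x1(1)])
      fix y assume y: "y \<in> \<Omega>"
      have "grad (\<lambda>z. K z / P z) y = grad (\<lambda>z. u z / P z) y"
        by (rule grad_local[OF dom(1) y]) (simp add: uK)
      then show "a1 y *\<^sub>R grad (\<lambda>z. K z / P z) y = a1 y *\<^sub>R grad (\<lambda>z. u z / P z) y" by simp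
    qed
    also have "\<dots> = 0"
    proof -
      have "1 - u x1 / K x1 = 0" using uK[OF x1(1)] Knz[of x1] OclO x1(1) by auto
      then show ?thesis using u_eq[OF x1(1)] by simp
    qed
    finally show False using x1(2) by simp
  qed
  define hd where "hd x = r x * (K x - u x)^2 / K x" for x
  have IC: "h integrable_on \<Omega>" if "continuous_on (closure \<Omega>) h" for h :: "'a \<Rightarrow> real"
    using intcl[OF dom(1,2) that] .
  have iK: "(\<lambda>x. r x * K x) integrable_on \<Omega>" by (rule IC) (intro continuous_intros cont)
  have iu: "(\<lambda>x. r x * u x) integrable_on \<Omega>" by (rule IC) (intro continuous_intros cont u_reg(2))
  have hdc: "continuous_on (closure \<Omega>) hd" unfolding hd_def[abs_def]
    by (intro continuous_intros cont u_reg(2)) (use Knz in auto)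
  have ihd: "hd integrable_on \<Omega>" by (rule IC[OF hdc])
  have if0: "f integrable_on \<Omega>" using int0 by blast
  have pw: "r x * K x - r x * u x = hd x - f x" if x: "x \<in> \<Omega>" for x
  proof -
    have k: "K x \<noteq> 0" using Knz OclO x by auto
    show ?thesis unfolding hd_def f_def using k
      by (simp add: field_simps power2_eq_square)
  qed
  have "integral \<Omega> (\<lambda>x. r x * K x) - integral \<Omega> (\<lambda>x. r x * u x) = integral \<Omega> (\<lambda>x. r x * K x - r x * u x)"
    using Henstock_Kurzweil_Integration.integral_diff[OF iK iu] by simp
  also have "\<dots> = integral \<Omega> (\<lambda>x. hd x - f x)" by (rule integral_cong) (rule pw)
  also have "\<dots> = integral \<Omega> hd - integral \<Omega> f"
    by (rule Henstock_Kurzweil_Integration.integral_diff[OF ihd if0])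
  also have "integral \<Omega> f = 0" using int0 by (rule integral_unique)
  finally have eq: "integral \<Omega> (\<lambda>x. r x * K x) - integral \<Omega> (\<lambda>x. r x * u x) = integral \<Omega> hd" by simp
  have "integral \<Omega> hd > 0"
  proof (rule int_pos[OF dom(1) x0(1)])
    show "continuous_on \<Omega> hd" using hdc OclO continuous_on_subset by blast
    show "hd integrable_on \<Omega>" by (rule ihd)
    fix x assume x: "x \<in> \<Omega>"
    show "0 \<le> hd x" unfolding hd_def using pos(1,4)[of x] OclO x by auto
  next
    have "r x0 > 0" "K x0 > 0" using pos(1,4)[of x0] OclO x0(1) by auto
    moreover have "(K x0 - u x0)^2 > 0" using x0(2) by simp
    ultimately show "hd x0 > 0" unfolding hd_def by simp
  qed
  with eq show ?thesis by linarith
qed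

end
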